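(* Under Assumptions (A1)–(A4), for every $\delta>0$ and all $n\ge N(d,t_0,\tilde\theta,\delta_0,\eta_0)$, $$\widetilde J_B(\delta,\mathcal G_n(\delta),\mathbb P)\le\frac{3^{(5+d)/2}\sqrt d\,(\log(nd))^{1+d/2}\,\delta}{(\log(1/t_0))^{1+d/2}}.$$
   Context: Let $b_k>0$ for all $k\in\mathbb N=\{0,1,2,\dots\}$, $b(\theta)=\sum_{k\ge0}b_k\theta^k$ with radius of convergence $R\in(0,\infty]$, $\mathcal T=[0,R]$ if $b(R)<\infty$ and $\mathcal T=[0,R)$ if $b(R)=\infty$, $f_\theta(k)=b_k\theta^k/b(\theta)$. Fix $d\ge1$, $\Theta=\mathcal T^d$; $\mathcal M$ is the set of pmfs $\pi(\mathbf k)=\int_\Theta\prod_{j=1}^d f_{\theta_j}(k_j)\,dQ(\boldsymbol\theta)$ on $\mathbb N^d$ with $Q$ any probability measure on $\Theta$; $\pi_0\in\mathcal M$ corresponds to $Q_0$, and $\mathbb P$ is the probability measure on $\mathbb N^d$ with pmf $\pi_0$. Hellinger distance: $h^2(\pi_1,\pi_2)=\frac12\sum_{\mathbf k}(\sqrt{\pi_1(\mathbf k)}-\sqrt{\pi_2(\mathbf k)})^2$. Let $K_n=\min\{K\in\mathbb N:\sum_{\mathbf k:\max_{j}k_j>K}\pi_0(\mathbf k)\le(\log(nd))^{2+d}/n\}$ and $\mathcal G_n(\delta)=\Big\{\mathbf k\mapsto\frac{\pi(\mathbf k)-\pi_0(\mathbf k)}{\pi(\mathbf k)+\pi_0(\mathbf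 k)}\mathbb I\{\max_{1\le j\le d}k_j\le K_n\}:\ \pi\in\mathcal M,\ h(\pi,\pi_0)\le\delta\Big\}$. For $\nu>0$, $H_B(\nu,\mathcal G,\mathbb P)$ is the logarithm of the smallest number of pairs of functions $(L,U)$ with $L\le U$ and $\int(U-L)^2d\mathbb P\le\nu^2$ needed so that every $g\in\mathcal G$ satisfies $L\le g\le U$ for one of the pairs; $\widetilde J_B(\delta,\mathcal G,\mathbb P)=\int_0^\delta\sqrt{1+H_B(u,\mathcal G,\mathbb P)}\,du$. Assumptions: (A1) If $R<\infty$, there is $q_0\in(0,1)$ with $\mathrm{supp}\,Q_0\subseteq[0,q_0R]^d$; if $R=\infty$, there is $M>0$ with $\mathrm{supp}\,Q_0\subseteq[0,M]^d$. (A2) If $Q_0(\{(0,\dots,0)\})>0$, there exist $\eta_0\in(0,1)$, $\delta_0\in(0,R)$ with $Q_0(\{(0,\dots,0)\})\le1-\eta_0$ and $\mathrm{supp}\,Q_0\cap\bigcup_{j}\{\boldsymbol\theta:\theta_j\in(0,\delta_0)\}=\varnothing$; if $Q_0(\{(0,\dots,0)\})=0$, there is $\delta_0\in(0,R)$ with the same support condition (then $\eta_0$ denotes an arbitrary fixed number in $(0,1]$). (A3) There is $V\in\mathbb N$ with $b_k/b_0\ge k^{-k}$ for $k\ge V$. (A4) $\lim_{k\to\infty}b_{k+1}/b_k$ exists in $[0,\infty)$. Constants: $t_0=\frac{q_0+1}{2}$, $\tilde\theta=q_0R$ if $R<\infty$; $t_0=\frac12$, $\tilde\theta=M$ if $R=\infty$.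 $U=\lfloor\tilde\theta\sup_{\theta\in(0,\tilde\theta)}b'(\theta)/b(\theta)\rfloor+1$, $W=\min\{w\ge3:\sup_{k\ge w}b_{k+1}/b_k\le t_0/\tilde\theta\}$, $N(d,t_0,\tilde\theta,\delta_0,\eta_0)=\Big\lfloor\frac1d\exp\Big\{\log\big(\tfrac{1}{\sqrt{t_0}}\big)\Big(U\vee V\vee W\vee\frac{b(\delta_0)}{b_0\eta_0^{1/d}}\vee\frac{1}{\delta_0^{1/d}}\Big)\Big\}\vee\frac{1}{t_0^{W-1}(1-t_0)}\Big\rfloor+1.$ *)

theory Defs
  imports "HOL-Analysis.Analysis" "HOL-Probability.Probability"
begin

definition bser :: "(nat \<Rightarrow> real) \<Rightarrow> real \<Rightarrow> real" where
  "bser b \<theta> = (\<Sum>k. b k * \<theta> ^ k)"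

definition Rad :: "(nat \<Rightarrow> real) \<Rightarrow> ereal" where
  "Rad b = conv_radius b"

definition Tset :: "(nat \<Rightarrow> real) \<Rightarrow> real set" where
  "Tset b = (if Rad b = \<infinity> then {0..}
             else if summable (\<lambda>k. b k * real_of_ereal (Rad b) ^ k)
                  then {0..real_of_ereal (Rad b)}
                  else {0..<real_of_ereal (Rad b)})"

definition fdens :: "(nat \<Rightarrow> real) \<Rightarrow> real \<Rightarrow> nat \<Rightarrow> real" where
  "fdens b \<theta> k = b k * \<theta> ^ k / bser b \<theta>"

definition Theta :: "(nat \<Rightarrow> real) \<Rightarrow> (real ^ 'd) set" where
  "Theta b = {\<theta>. \<forall>j. \<theta> $ j \<in> Tset b}"

definition valid_mixing :: "(nat \<Rightarrow> real) \<Rightarrow> (real ^ 'd) measure \<Rightarrow> bool" where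
  "valid_mixing b Q \<longleftrightarrow> prob_space Q \<and> sets Q = sets (borel :: (real ^ 'd) measure)
      \<and> emeasure Q (Theta b) = 1"

definition mixpmf :: "(nat \<Rightarrow> real) \<Rightarrow> (real ^ 'd) measure \<Rightarrow> nat ^ 'd \<Rightarrow> real" where
  "mixpmf b Q = (\<lambda>k. \<integral>\<theta>. (\<Prod>j\<in>UNIV. fdens b (\<theta> $ j) (k $ j)) \<partial>Q)"

definition Mset :: "(nat \<Rightarrow> real) \<Rightarrow> (nat ^ 'd \<Rightarrow> real) set" where
  "Mset b = {mixpmf b Q | Q. valid_mixing b Q}"

definition msupp :: "'a::topological_space measure \<Rightarrow> 'a set" where
  "msupp Q = {x. \<forall>U. open U \<and> x \<in> U \<longrightarrow> emeasure Q U > 0}"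

definition hell :: "('a \<Rightarrow> real) \<Rightarrow> ('a \<Rightarrow> real) \<Rightarrow> real" where
  "hell p q = sqrt ((1/2) * infsum (\<lambda>k. (sqrt (p k) - sqrt (q k))^2) UNIV)"

definition maxk :: "nat ^ 'd \<Rightarrow> nat" where
  "maxk k = Max (range (\<lambda>j. k $ j))"

definition Kn :: "(nat ^ 'd \<Rightarrow> real) \<Rightarrow> nat \<Rightarrow> nat" where
  "Kn p0 n = (LEAST K::nat. infsum p0 {k. maxk k > K}
       \<le> (ln (real (n * CARD('d)))) ^ (2 + CARD('d)) / real n)"

definition Gn :: "(nat \<Rightarrow> real) \<Rightarrow> (nat ^ 'd \<Rightarrow> real) \<Rightarrow> nat \<Rightarrow> real
                  \<Rightarrow> (nat ^ 'd \<Rightarrow> real) set" where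
  "Gn b p0 n \<delta> = {(\<lambda>k. (p k - p0 k) / (p k + p0 k) * (if maxk k \<le> Kn p0 n then 1 else 0))
                   | p. p \<in> Mset b \<and> hell p p0 \<le> \<delta>}"

definition Pmeas :: "(nat ^ 'd \<Rightarrow> real) \<Rightarrow> (nat ^ 'd) measure" where
  "Pmeas p0 = density (count_space UNIV) (\<lambda>k. ennreal (p0 k))"

definition bracket_cover :: "'a measure \<Rightarrow> ('a \<Rightarrow> real) set \<Rightarrow> real
      \<Rightarrow> (('a \<Rightarrow> real) \<times> ('a \<Rightarrow> real)) set \<Rightarrow> bool" where
  "bracket_cover P G \<nu> F \<longleftrightarrow> finite F
     \<and> (\<forall>(L, U) \<in> F. (\<forall>x. L x \<le> U x)
            \<and> (\<integral>\<^sup>+ x. ennreal ((U x - L x)^2) \<partial>P) \<le> ennreal (\<nu>^2))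
     \<and> (\<forall>g\<in>G. \<exists>(L, U) \<in> F. \<forall>x. L x \<le> g x \<and> g x \<le> U x)"

text \<open>Bracketing number (infinity if no finite cover exists).\<close>
definition brack_num :: "'a measure \<Rightarrow> ('a \<Rightarrow> real) set \<Rightarrow> real \<Rightarrow> enat" where
  "brack_num P G \<nu> = (INF F \<in> {F. bracket_cover P G \<nu> F}. enat (card F))"

definition HB :: "'a measure \<Rightarrow> ('a \<Rightarrow> real) set \<Rightarrow> real \<Rightarrow> ereal" where
  "HB P G \<nu> = (case brack_num P G \<nu> of enat m \<Rightarrow> ereal (ln (real m)) | \<infinity> \<Rightarrow> \<infinity>)"

definition JB :: "'a measure \<Rightarrow> ('a \<Rightarrow> real) set \<Rightarrow> real \<Rightarrow> ennreal" where
  "JB P G \<delta> = (\<integral>\<^sup>+ u \<in> {0..\<delta>}.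
       (case HB P G u of ereal x \<Rightarrow> ennreal (sqrt (1 + x)) | _ \<Rightarrow> \<infinity>) \<partial>lborel)"

definition t0c :: "(nat \<Rightarrow> real) \<Rightarrow> real \<Rightarrow> real" where
  "t0c b q0 = (if Rad b = \<infinity> then 1/2 else (q0 + 1) / 2)"

definition thetac :: "(nat \<Rightarrow> real) \<Rightarrow> real \<Rightarrow> real \<Rightarrow> real" where
  "thetac b q0 M = (if Rad b = \<infinity> then M else q0 * real_of_ereal (Rad b))"

definition Uc :: "(nat \<Rightarrow> real) \<Rightarrow> real \<Rightarrow> real" where
  "Uc b th = real_of_int \<lfloor>th * (SUP \<theta>\<in>{0<..<th}. deriv (bser b) \<theta> / bser b \<theta>)\<rfloor> + 1"

definition Wc :: "(nat \<Rightarrow> real) \<Rightarrow> real \<Rightarrow> real \<Rightarrow> nat" where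
  "Wc b t0 th = (LEAST w::nat. 3 \<le> w \<and> (SUP k\<in>{w..}. b (Suc k) / b k) \<le> t0 / th)"

definition Nc :: "(nat \<Rightarrow> real) \<Rightarrow> nat \<Rightarrow> real \<Rightarrow> real \<Rightarrow> real \<Rightarrow> real \<Rightarrow> nat \<Rightarrow> nat" where
  "Nc b d t0 th \<delta>0 \<eta>0 V =
     nat \<lfloor>max ((1 / real d) * exp (ln (1 / sqrt t0) *
              max (max (max (max (Uc b th) (real V)) (real (Wc b t0 th)))
                        (bser b \<delta>0 / (b 0 * \<eta>0 powr (1 / real d))))
                  (1 / \<delta>0 powr (1 / real d))))
            (1 / (t0 ^ (Wc b t0 th - 1) * (1 - t0)))\<rfloor> + 1"

end

theory Submission imports Defs begin

lemma box_sum_prod: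
  fixes g :: "'d::finite \<Rightarrow> nat \<Rightarrow> real" and A :: "'d \<Rightarrow> nat set"
  assumes "\<And>i. finite (A i)"
  shows "(\<Sum>k\<in>{k::nat^'d. \<forall>i. k$i \<in> A i}. \<Prod>i\<in>UNIV. g i (k$i)) = (\<Prod>i\<in>UNIV. \<Sum>x\<in>A i. g i x)"
proof -
  have bij: "bij_betw vec_lambda (PiE UNIV A) {k::nat^'d. \<forall>i. k$i \<in> A i}"
    unfolding bij_betw_def
  proof
    show "inj_on vec_lambda (PiE UNIV A)"
      by (intro inj_onI) (metis vec_lambda_beta ext)
    show "vec_lambda ` PiE UNIV A = {k::nat^'d. \<forall>i. k$i \<in> A i}"
    proof
      show "vec_lambda ` PiE UNIV A \<subseteq> {k::nat^'d. \<forall>i. k$i \<in> A i}" by auto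
      show "{k::nat^'d. \<forall>i. k$i \<in> A i} \<subseteq> vec_lambda ` PiE UNIV A"
      proof
        fix k :: "nat^'d" assume "k \<in> {k::nat^'d. \<forall>i. k$i \<in> A i}"
        then have "vec_nth k \<in> PiE UNIV A" by auto
        moreover have "k = vec_lambda (vec_nth k)" by simp
        ultimately show "k \<in> vec_lambda ` PiE UNIV A" by blast
      qed
    qed
  qed
  have "(\<Prod>i\<in>UNIV. \<Sum>x\<in>A i. g i x) = (\<Sum>p\<in>PiE UNIV A. \<Prod>i\<in>UNIV. g i (p i))"
    by (rule prod_sum_PiE) (auto simp: assms)
  also have "\<dots> = (\<Sum>k\<in>{k::nat^'d. \<forall>i. k$i \<in> A i}. \<Prod>i\<in>UNIV. g i (k$i))"
    using sum.reindex_bij_betw[OF bij, where g="\<lambda>k. \<Prod>i\<in>UNIV. g i (k$i)"] by simp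
  finally show ?thesis by simp
qed

lemma finite_box:
  assumes "\<And>i. finite (A i)"
  shows "finite {k::nat^'d::finite. \<forall>i. k$i \<in> A i}"
proof -
  have "{k::nat^'d. \<forall>i. k$i \<in> A i} = vec_lambda ` PiE UNIV A"
  proof
    show "vec_lambda ` PiE UNIV A \<subseteq> {k::nat^'d. \<forall>i. k$i \<in> A i}" by auto
    show "{k::nat^'d. \<forall>i. k$i \<in> A i} \<subseteq> vec_lambda ` PiE UNIV A"
    proof
      fix k :: "nat^'d" assume "k \<in> {k::nat^'d. \<forall>i. k$i \<in> A i}"
      then have "vec_nth k \<in> PiE UNIV A" by auto
      moreover have "k = vec_lambda (vec_nth k)" by simp
      ultimately show "k \<in> vec_lambda ` PiE UNIV A" by blast
    qed
  qed
  then show ?thesis using assms by (simp add: finite_PiE)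
qed

lemma finite_bound_box:
  fixes F :: "(nat^'d::finite) set"
  assumes "finite F"
  obtains N where "F \<subseteq> {k. \<forall>i. k$i \<in> {..N}}"
proof -
  let ?N = "Max ((\<lambda>(k,i). k$i) ` (F \<times> UNIV))"
  have fin: "finite ((\<lambda>(k,i). k$i) ` (F \<times> (UNIV::'d set)))" using assms by simp
  have "F \<subseteq> {k. \<forall>i. k$i \<in> {..?N}}"
  proof
    fix k assume "k \<in> F"
    then have "\<forall>i. k$i \<le> ?N" using fin by (auto intro!: Max_ge)
    then show "k \<in> {k. \<forall>i. k$i \<in> {..?N}}" by auto
  qed
  then show ?thesis using that by blast
qed

lemma prod_box_le1:
  fixes f :: "'d::finite \<Rightarrow> nat \<Rightarrow> real"
  assumes nn: "\<And>i x. 0 \<le> f i x" and le1: "\<And>i N. (\<Sum>x\<le>N. f i x) \<le> 1" and F: "finite F"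
  shows "(\<Sum>k\<in>F. \<Prod>i\<in>UNIV. f i (k$i)) \<le> 1"
proof -
  obtain N where N: "F \<subseteq> {k. \<forall>i. k$i \<in> {..N}}" using finite_bound_box[OF F] by blast
  have "(\<Sum>k\<in>F. \<Prod>i\<in>UNIV. f i (k$i)) \<le> (\<Sum>k\<in>{k. \<forall>i. k$i \<in> {..N}}. \<Prod>i\<in>UNIV. f i (k$i))"
    by (rule sum_mono2[OF finite_box N]) (auto intro!: prod_nonneg nn)
  also have "\<dots> = (\<Prod>i\<in>UNIV. \<Sum>x\<in>{..N}. f i x)"
    by (rule box_sum_prod) simp
  also have "\<dots> \<le> 1"
    by (rule prod_le_1) (auto intro!: sum_nonneg nn le1)
  finally show ?thesis .
qed

lemma prod_box_tail:
  fixes f :: "'d::finite \<Rightarrow> nat \<Rightarrow> real"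
  assumes nn: "\<And>i x. 0 \<le> f i x" and le1: "\<And>i N. (\<Sum>x\<le>N. f i x) \<le> 1"
    and tail: "\<And>i N. (\<Sum>x\<in>{K<..N}. f i x) \<le> \<tau>"
    and F: "finite F" and FK: "F \<subseteq> {k. \<exists>i. K < k$i}"
  shows "(\<Sum>k\<in>F. \<Prod>i\<in>UNIV. f i (k$i)) \<le> real CARD('d) * \<tau>"
proof -
  obtain N where N: "F \<subseteq> {k. \<forall>i. k$i \<in> {..N}}" using finite_bound_box[OF F] by blast
  have tau0: "0 \<le> \<tau>" using tail[of undefined 0] by simp
  let ?\<phi> = "\<lambda>k::nat^'d. \<Prod>i\<in>UNIV. f i (k$i)"
  have phi0: "0 \<le> ?\<phi> k" for k by (auto intro!: prod_nonneg nn)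
  have "(\<Sum>k\<in>F. ?\<phi> k) \<le> (\<Sum>k\<in>F. \<Sum>i\<in>UNIV. if K < k$i then ?\<phi> k else 0)"
  proof (rule sum_mono)
    fix k assume "k \<in> F"
    then obtain i where i: "K < k$i" using FK by blast
    have "?\<phi> k = (if K < k$i then ?\<phi> k else 0)" using i by simp
    also have "\<dots> \<le> (\<Sum>i\<in>UNIV. if K < k$i then ?\<phi> k else 0)"
      by (rule member_le_sum) (auto simp: phi0)
    finally show "?\<phi> k \<le> (\<Sum>i\<in>UNIV. if K < k$i then ?\<phi> k else 0)" .
  qed
  also have "\<dots> = (\<Sum>i\<in>UNIV. \<Sum>k\<in>F. if K < k$i then ?\<phi> k else 0)"
    by (rule sum.swap)
  also have "\<dots> \<le> (\<Sum>i\<in>(UNIV::'d set). \<tau>)"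
  proof (rule sum_mono)
    fix i :: 'd
    let ?A = "\<lambda>l. if l = i then {K<..N} else {..N}"
    have "(\<Sum>k\<in>F. if K < k$i then ?\<phi> k else 0) = (\<Sum>k\<in>F \<inter> {k. K < k$i}. ?\<phi> k)"
      by (simp add: sum.inter_restrict[OF F])
    also have "\<dots> \<le> (\<Sum>k\<in>{k. \<forall>l. k$l \<in> ?A l}. ?\<phi> k)"
      by (rule sum_mono2[OF finite_box]) (use N in \<open>auto simp: phi0\<close>)
    also have "\<dots> = (\<Prod>l\<in>UNIV. \<Sum>x\<in>?A l. f l x)"
      by (rule box_sum_prod) simp
    also have "\<dots> = (\<Sum>x\<in>?A i. f i x) * (\<Prod>l\<in>UNIV-{i}. \<Sum>x\<in>?A l. f l x)"
      by (rule prod.remove) auto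
    also have "\<dots> \<le> \<tau> * 1"
    proof (rule mult_mono)
      show "(\<Sum>x\<in>?A i. f i x) \<le> \<tau>" using tail by simp
      show "(\<Prod>l\<in>UNIV-{i}. \<Sum>x\<in>?A l. f l x) \<le> 1"
        by (rule prod_le_1) (auto intro!: sum_nonneg nn le1)
    qed (auto simp: tau0 intro!: prod_nonneg sum_nonneg nn)
    finally show "(\<Sum>k\<in>F. if K < k$i then ?\<phi> k else 0) \<le> \<tau>" by simp
  qed
  also have "\<dots> = real CARD('d) * \<tau>" by simp
  finally show ?thesis .
qed

lemma Tset_summable:
  assumes "\<theta> \<in> Tset b"
  shows "0 \<le> \<theta> \<and> summable (\<lambda>k. b k * \<theta> ^ k)"
proof (cases "Rad b = \<infinity>")
  case True
  then show ?thesis using assms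
    by (auto simp: Tset_def Rad_def intro!: summable_in_conv_radius)
next
  case False
  have R0: "0 \<le> Rad b" unfolding Rad_def by (rule conv_radius_nonneg)
  then have Req: "Rad b = ereal (real_of_ereal (Rad b))" using False
    by (cases "Rad b") auto
  show ?thesis
  proof (cases "summable (\<lambda>k. b k * real_of_ereal (Rad b) ^ k)")
    case True
    with False assms have th: "\<theta> \<in> {0..real_of_ereal (Rad b)}" by (simp add: Tset_def)
    show ?thesis
    proof (cases "\<theta> = real_of_ereal (Rad b)")
      case True then show ?thesis using th \<open>summable _\<close> by simp
    next
      case False
      then have lt: "\<theta> < real_of_ereal (Rad b)" using th by simp
      have "ereal (norm \<theta>) = ereal \<theta>" using th by simp
      also have "\<dots> < Rad b" using lt by (subst Req) simp
      finally have "ereal (norm \<theta>) < conv_radius b" by (simp add: Rad_def)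
      then show ?thesis using th by (auto intro!: summable_in_conv_radius)
    qed
  next
    case nsum: False
    with False assms have th: "\<theta> \<in> {0..<real_of_ereal (Rad b)}" by (simp add: Tset_def)
    then have lt: "\<theta> < real_of_ereal (Rad b)" by simp
    have "ereal (norm \<theta>) = ereal \<theta>" using th by simp
    also have "\<dots> < Rad b" using lt by (subst Req) simp
    finally have "ereal (norm \<theta>) < conv_radius b" by (simp add: Rad_def)
    then show ?thesis using th by (auto intro!: summable_in_conv_radius)
  qed
qed

lemma bser_pos:
  assumes bpos: "\<forall>k. b k > 0" and th: "0 \<le> \<theta>" and sm: "summable (\<lambda>k. b k * \<theta> ^ k)"
  shows "b 0 \<le> bser b \<theta>" "0 < bser b \<theta>"
proof -
  have "(\<Sum>k<1. b k * \<theta> ^ k) \<le> bser b \<theta>" unfolding bser_def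
    by (rule sum_le_suminf[OF sm]) (auto simp: bpos th less_imp_le)
  then show "b 0 \<le> bser b \<theta>" by simp
  then show "0 < bser b \<theta>" using bpos by (meson less_le_trans)
qed

lemma fdens_props:
  assumes bpos: "\<forall>k. b k > 0" and th: "0 \<le> \<theta>" and sm: "summable (\<lambda>k. b k * \<theta> ^ k)"
  shows "0 \<le> fdens b \<theta> k" "(\<Sum>x\<le>N. fdens b \<theta> x) \<le> 1"
proof -
  have bp: "0 < bser b \<theta>" using bser_pos[OF assms] by simp
  show "0 \<le> fdens b \<theta> k" unfolding fdens_def using bp bpos th
    by (simp add: less_imp_le)
  have "(\<Sum>x\<le>N. fdens b \<theta> x) = (\<Sum>x<Suc N. b x * \<theta> ^ x) / bser b \<theta>"
    unfolding fdens_def by (simp add: sum_divide_distrib lessThan_Suc_atMost)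
  also have "\<dots> \<le> 1"
  proof -
    have "(\<Sum>x<Suc N. b x * \<theta> ^ x) \<le> bser b \<theta>" unfolding bser_def
      by (rule sum_le_suminf[OF sm]) (auto simp: bpos th less_imp_le)
    then show ?thesis using bp by simp
  qed
  finally show "(\<Sum>x\<le>N. fdens b \<theta> x) \<le> 1" .
qed

lemma mix_sum_le:
  fixes \<phi> :: "'k \<Rightarrow> 'a \<Rightarrow> real"
  assumes Q: "prob_space Q" and F: "finite F"
    and AE: "AE \<theta> in Q. (\<forall>k. 0 \<le> \<phi> k \<theta>) \<and> (\<Sum>k\<in>F. \<phi> k \<theta>) \<le> c"
  shows "(\<Sum>k\<in>F. \<integral>\<theta>. \<phi> k \<theta> \<partial>Q) \<le> c"
proof -
  interpret prob_space Q by (rule Q)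
  let ?F' = "{k\<in>F. integrable Q (\<phi> k)}"
  have "(\<Sum>k\<in>F. \<integral>\<theta>. \<phi> k \<theta> \<partial>Q) = (\<Sum>k\<in>?F'. \<integral>\<theta>. \<phi> k \<theta> \<partial>Q)"
    by (rule sum.mono_neutral_right[OF F]) (auto simp: not_integrable_integral_eq)
  also have "\<dots> = (\<integral>\<theta>. (\<Sum>k\<in>?F'. \<phi> k \<theta>) \<partial>Q)"
    by (subst Bochner_Integration.integral_sum) auto
  also have "\<dots> \<le> (\<integral>\<theta>. c \<partial>Q)"
  proof (rule integral_mono_AE')
    show "integrable Q (\<lambda>\<theta>. c)" by simp
    show "AE \<theta> in Q. (\<Sum>k\<in>?F'. \<phi> k \<theta>) \<le> c"
      using AE
    proof eventually_elim
      case (elim \<theta>)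
      have "(\<Sum>k\<in>?F'. \<phi> k \<theta>) \<le> (\<Sum>k\<in>F. \<phi> k \<theta>)"
        by (rule sum_mono2[OF F]) (use elim in auto)
      then show ?case using elim by linarith
    qed
    show "AE \<theta> in Q. 0 \<le> c"
      using AE
    proof eventually_elim
      case (elim \<theta>)
      have "0 \<le> (\<Sum>k\<in>F. \<phi> k \<theta>)" using elim by (auto intro!: sum_nonneg)
      then show ?case using elim by linarith
    qed
  qed
  also have "\<dots> = c" by (simp add: prob_space)
  finally show ?thesis .
qed

lemma valid_AE:
  assumes "valid_mixing b Q"
  shows "AE \<theta> in Q. \<theta> \<in> Theta b"
proof -
  interpret prob_space Q using assms by (simp add: valid_mixing_def)
  have "prob (Theta b) = 1" using assms by (simp add: valid_mixing_def measure_def)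
  then show ?thesis by (rule AE_prob_1)
qed

lemma Theta_fdens:
  assumes bpos: "\<forall>k. b k > 0" and th: "\<theta> \<in> Theta b"
  shows "\<And>j x. 0 \<le> fdens b (\<theta>$j) x" "\<And>j N. (\<Sum>x\<le>N. fdens b (\<theta>$j) x) \<le> 1"
proof -
  fix j
  have "0 \<le> \<theta>$j \<and> summable (\<lambda>k. b k * (\<theta>$j) ^ k)"
    using th by (intro Tset_summable) (simp add: Theta_def)
  then show "\<And>x. 0 \<le> fdens b (\<theta>$j) x" "\<And>N. (\<Sum>x\<le>N. fdens b (\<theta>$j) x) \<le> 1"
    using fdens_props[OF bpos] by auto
qed

lemma mix_nonneg:
  assumes bpos: "\<forall>k. b k > 0" and Q: "valid_mixing b Q"
  shows "0 \<le> mixpmf b Q k"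
  unfolding mixpmf_def
  by (rule integral_nonneg_AE, use valid_AE[OF Q] in eventually_elim)
     (auto intro!: prod_nonneg Theta_fdens[OF bpos])

lemma mix_finsum:
  fixes Q :: "(real^'d::finite) measure"
  assumes bpos: "\<forall>k. b k > 0" and Q: "valid_mixing b Q" and F: "finite F"
  shows "(\<Sum>k\<in>F. mixpmf b Q k) \<le> 1"
  unfolding mixpmf_def
proof (rule mix_sum_le[OF _ F])
  show "prob_space Q" using Q by (simp add: valid_mixing_def)
  show "AE \<theta> in Q. (\<forall>k. 0 \<le> (\<Prod>j\<in>UNIV. fdens b (\<theta> $ j) (k $ j))) \<and>
        (\<Sum>k\<in>F. \<Prod>j\<in>UNIV. fdens b (\<theta> $ j) (k $ j)) \<le> 1"
    using valid_AE[OF Q]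
  proof eventually_elim
    case (elim \<theta>)
    show ?case
      using prod_box_le1[where f="\<lambda>j x. fdens b (\<theta>$j) x", OF _ _ F] Theta_fdens[OF bpos elim]
      by (auto intro!: prod_nonneg)
  qed
qed

lemma mix_summable:
  fixes Q :: "(real^'d::finite) measure"
  assumes bpos: "\<forall>k. b k > 0" and Q: "valid_mixing b Q"
  shows "mixpmf b Q summable_on A"
proof (rule nonneg_bdd_above_summable_on)
  show "\<And>x. x \<in> A \<Longrightarrow> 0 \<le> mixpmf b Q x" using mix_nonneg[OF bpos Q] by simp
  show "bdd_above (sum (mixpmf b Q) ` {F. F \<subseteq> A \<and> finite F})"
    using mix_finsum[OF bpos Q] by (auto intro!: bdd_aboveI)
qed

lemma hell_point:
  fixes p q :: "'a \<Rightarrow> real"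
  assumes pn: "\<And>k. 0 \<le> p k" and qn: "\<And>k. 0 \<le> q k"
    and ps: "p summable_on UNIV" and qs: "q summable_on UNIV" and h: "hell p q \<le> \<delta>"
  shows "\<bar>sqrt (p k) - sqrt (q k)\<bar> \<le> sqrt 2 * \<delta>"
proof -
  let ?h = "\<lambda>k. (sqrt (p k) - sqrt (q k))^2"
  have hle: "?h k \<le> p k + q k" for k
  proof -
    have "?h k = p k + q k - 2 * sqrt (p k) * sqrt (q k)"
      using pn[of k] qn[of k] by (simp add: power2_eq_square algebra_simps)
    also have "\<dots> \<le> p k + q k" using pn[of k] qn[of k] by simp
    finally show ?thesis .
  qed
  have pqs: "(\<lambda>k. p k + q k) summable_on UNIV" using ps qs by (rule summable_on_add)
  have hs: "?h summable_on UNIV"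
    by (rule summable_on_comparison_test[OF pqs]) (auto simp: hle)
  have "?h k = infsum ?h {k}" by simp
  also have "\<dots> \<le> infsum ?h UNIV"
    by (rule infsum_mono_neutral) (auto simp: hs)
  finally have hk: "?h k \<le> infsum ?h UNIV" .
  have inn: "0 \<le> infsum ?h UNIV" by (intro Infinite_Sum.infsum_nonneg zero_le_power2)
  have hh: "(hell p q)^2 = infsum ?h UNIV / 2" unfolding hell_def using inn by simp
  have h0: "0 \<le> hell p q" unfolding hell_def using inn by simp
  then have d0: "0 \<le> \<delta>" using h by linarith
  have "(hell p q)^2 \<le> \<delta>^2" using h h0 by (intro power_mono) auto
  then have "?h k \<le> 2 * \<delta>^2" using hk hh by linarith
  then have "sqrt (?h k) \<le> sqrt (2 * \<delta>^2)" by (rule real_sqrt_le_mono)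
  then show ?thesis using d0 by (simp add: real_sqrt_mult)
qed

lemma g_bound:
  fixes p q \<delta> :: real
  assumes pn: "0 \<le> p" and qn: "0 < q" and d: "\<bar>sqrt p - sqrt q\<bar> \<le> sqrt 2 * \<delta>"
  shows "\<bar>(p - q) / (p + q)\<bar> \<le> 2 * \<delta> / sqrt q"
proof -
  define a where "a = sqrt p"
  define c where "c = sqrt q"
  have a0: "0 \<le> a" and c0: "0 < c" using pn qn by (auto simp: a_def c_def)
  have pa: "p = a^2" and qc: "q = c^2" using pn qn by (auto simp: a_def c_def)
  have s2: "sqrt 2 \<le> 3/2" by (rule real_le_lsqrt) (auto simp: power2_eq_square)
  have d': "\<bar>a - c\<bar> \<le> sqrt 2 * \<delta>" using d by (simp add: a_def c_def)
  have "0 \<le> sqrt 2 * \<delta>" using d' abs_ge_zero[of "a - c"] by linarith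
  then have dd: "0 \<le> \<delta>" by (simp add: zero_le_mult_iff)
  have key: "(a + c) * c \<le> 5/4 * (a^2 + c^2)"
  proof -
    have "0 \<le> (a - c/2)^2" by simp
    then have h1: "a * c \<le> a*a + c*c/4" by (simp add: power2_eq_square algebra_simps)
    have h2: "0 \<le> a*a" by simp
    have "(a + c) * c = a*c + c*c" by (simp add: algebra_simps)
    also have "\<dots> \<le> 5/4 * (a*a) + 5/4 * (c*c)" using h1 h2 by linarith
    finally show ?thesis by (simp add: power2_eq_square algebra_simps)
  qed
  have pos: "0 < a^2 + c^2" using c0 by (simp add: add_nonneg_pos)
  have "\<bar>(p - q) / (p + q)\<bar> = \<bar>a - c\<bar> * (a + c) / (a^2 + c^2)"
  proof -
    have "a^2 - c^2 = (a - c) * (a + c)" by (simp add: power2_eq_square algebra_simps)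
    then have "\<bar>a^2 - c^2\<bar> = \<bar>a - c\<bar> * (a + c)" using a0 c0 by (simp add: abs_mult)
    moreover have "\<bar>a^2 + c^2\<bar> = a^2 + c^2" using pos by simp
    ultimately show ?thesis by (simp add: pa qc abs_divide)
  qed
  also have "\<dots> \<le> 2 * \<delta> / c"
  proof -
    have "\<bar>a - c\<bar> * ((a + c) * c) \<le> (sqrt 2 * \<delta>) * (5/4 * (a^2 + c^2))"
      by (rule mult_mono[OF d' key]) (use a0 c0 dd in auto)
    also have "\<dots> \<le> 2 * \<delta> * (a^2 + c^2)"
    proof -
      have "sqrt 2 * \<delta> \<le> 3/2 * \<delta>" using s2 dd by (rule mult_right_mono)
      then have "sqrt 2 * \<delta> * (5/4) \<le> 2 * \<delta>" using dd by linarith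
      then have "sqrt 2 * \<delta> * (5/4) * (a^2 + c^2) \<le> 2 * \<delta> * (a^2 + c^2)"
        using pos by (intro mult_right_mono) auto
      then show ?thesis by (simp add: mult.assoc)
    qed
    finally have "\<bar>a - c\<bar> * (a + c) * c \<le> 2 * \<delta> * (a^2 + c^2)" by (simp add: mult.assoc)
    then show ?thesis using pos c0 by (simp add: field_simps)
  qed
  finally show ?thesis by (simp add: c_def)
qed

lemma msupp_AE:
  fixes Q :: "'a::{second_countable_topology} measure"
  assumes sets: "sets Q = sets borel" and sub: "msupp Q \<subseteq> B"
  shows "AE x in Q. x \<in> B"
proof -
  define \<F> where "\<F> = {U. open U \<and> emeasure Q U = 0}"
  obtain \<F>' where F': "\<F>' \<subseteq> \<F>" "countable \<F>'" "\<Union>\<F>' = \<Union>\<F>"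
    using Lindelof[of \<F>] unfolding \<F>_def by blast
  have "(\<Union>U\<in>\<F>'. U) \<in> null_sets Q"
  proof (rule null_sets_UN')
    show "countable \<F>'" by (rule F')
    fix U assume "U \<in> \<F>'"
    then have "open U" "emeasure Q U = 0" using F' unfolding \<F>_def by auto
    then show "U \<in> null_sets Q" using sets by (auto simp: null_sets_def)
  qed
  then have N: "\<Union>\<F> \<in> null_sets Q" using F' by simp
  show ?thesis
  proof (rule AE_I'[OF N])
    show "{x \<in> space Q. x \<notin> B} \<subseteq> \<Union>\<F>"
    proof
      fix x assume "x \<in> {x \<in> space Q. x \<notin> B}"
      then have "x \<notin> msupp Q" using sub by auto
      then obtain U where "open U" "x \<in> U" "\<not> emeasure Q U > 0" unfolding msupp_def by auto
      then show "x \<in> \<Union>\<F>" unfolding \<F>_def by (auto simp: not_gr_zero)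
    qed
  qed
qed

lemma ratio_radius:
  assumes bpos: "\<forall>k. b k > 0" and A4: "convergent (\<lambda>k. b (Suc k) / b k)"
  obtains c where "(\<lambda>k. b (Suc k) / b k) \<longlonglongrightarrow> c" "0 \<le> c"
    "c > 0 \<Longrightarrow> Rad b = ereal (1/c)"
proof -
  obtain c where c: "(\<lambda>k. b (Suc k) / b k) \<longlonglongrightarrow> c" using A4 by (auto simp: convergent_def)
  have c0: "0 \<le> c"
    by (rule LIMSEQ_le_const[OF c]) (use bpos in \<open>auto intro!: divide_nonneg_nonneg less_imp_le\<close>)
  have "Rad b = ereal (1/c)" if cp: "c > 0"
  proof -
    have "(\<lambda>k. inverse (b (Suc k) / b k)) \<longlonglongrightarrow> inverse c"
      using c cp by (intro tendsto_inverse) auto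
    then have lim: "(\<lambda>k. norm (b k) / norm (b (Suc k))) \<longlonglongrightarrow> 1/c"
      using bpos by (simp add: abs_of_pos less_imp_le inverse_eq_divide)
    have "1/c \<noteq> 0" using cp by simp
    then show ?thesis unfolding Rad_def
      using conv_radius_ratio_limit_nonzero[OF refl _ lim] by blast
  qed
  then show ?thesis using that c c0 by blast
qed

lemma consts_props:
  fixes b :: "nat \<Rightarrow> real"
  assumes b_pos: "\<forall>k. b k > 0"
    and R_pos: "Rad b > 0"
    and A1_fin: "Rad b \<noteq> \<infinity> \<longrightarrow> 0 < q0 \<and> q0 < 1"
    and A1_inf: "Rad b = \<infinity> \<longrightarrow> 0 < M"
    and A4: "convergent (\<lambda>k. b (Suc k) / b k)"
  shows "1/2 \<le> t0c b q0" "t0c b q0 < 1" "0 < thetac b q0 M"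
    "\<And>\<theta>. 0 \<le> \<theta> \<Longrightarrow> \<theta> \<le> thetac b q0 M \<Longrightarrow> summable (\<lambda>k. b k * \<theta>^k) \<and> \<theta> \<in> Tset b"
    "3 \<le> Wc b (t0c b q0) (thetac b q0 M)"
    "\<And>k. Wc b (t0c b q0) (thetac b q0 M) \<le> k \<Longrightarrow> b (Suc k) / b k \<le> t0c b q0 / thetac b q0 M"
proof -
  let ?t = "t0c b q0" and ?th = "thetac b q0 M"
  show t1: "1/2 \<le> ?t" "?t < 1" using A1_fin by (auto simp: t0c_def)
  have R0: "0 \<le> Rad b" unfolding Rad_def by (rule conv_radius_nonneg)
  obtain R where R: "Rad b \<noteq> \<infinity> \<Longrightarrow> Rad b = ereal R \<and> 0 < R"
    using R_pos by (cases "Rad b") auto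
  show th0: "0 < ?th" using A1_fin A1_inf R by (auto simp: thetac_def)
  have thR: "Rad b \<noteq> \<infinity> \<Longrightarrow> ?th < R" using A1_fin R by (auto simp: thetac_def)
  show "summable (\<lambda>k. b k * \<theta>^k) \<and> \<theta> \<in> Tset b" if "0 \<le> \<theta>" "\<theta> \<le> ?th" for \<theta>
  proof (cases "Rad b = \<infinity>")
    case True
    then show ?thesis using that by (auto simp: Tset_def Rad_def intro!: summable_in_conv_radius)
  next
    case False
    have "ereal (norm \<theta>) < Rad b" using R[OF False] thR[OF False] that by auto
    then show ?thesis using that R[OF False] thR[OF False]
      by (auto simp: Tset_def Rad_def intro!: summable_in_conv_radius)
  qed
  obtain c where c: "(\<lambda>k. b (Suc k) / b k) \<longlonglongrightarrow> c" "0 \<le> c" "c > 0 \<Longrightarrow> Rad b = ereal (1/c)"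
    using ratio_radius[OF b_pos A4] by blast
  have clt: "c < ?t / ?th"
  proof (cases "c = 0")
    case True then show ?thesis using t1 th0 by simp
  next
    case False
    then have cp: "c > 0" using c by simp
    then have RR: "Rad b \<noteq> \<infinity>" "R = 1/c" using c(3) R by auto
    then have th: "?th = q0 / c" using RR by (simp add: thetac_def R[OF RR(1)])
    have q: "0 < q0" "q0 < 1" using A1_fin RR by auto
    have t: "?t = (q0 + 1)/2" using RR by (simp add: t0c_def)
    have "c * ?th < ?t" using cp q by (simp add: th t)
    then show ?thesis using th0 by (simp add: field_simps)
  qed
  have ev: "eventually (\<lambda>k. b (Suc k) / b k < ?t / ?th) sequentially"
    using order_tendstoD(2)[OF c(1) clt] .
  then obtain w0 where w0: "\<And>k. k \<ge> w0 \<Longrightarrow> b (Suc k) / b k < ?t / ?th"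
    by (auto simp: eventually_sequentially)
  have bdd: "bdd_above ((\<lambda>k. b (Suc k) / b k) ` A)" for A
  proof -
    obtain K where "\<forall>n. norm (b (Suc n) / b n) \<le> K"
      using convergent_imp_Bseq[OF A4] by (auto simp: Bseq_def)
    then show ?thesis using b_pos by (auto intro!: bdd_aboveI[where M=K] simp: abs_of_pos)
  qed
  have ex: "3 \<le> max 3 w0 \<and> (SUP k\<in>{max 3 w0..}. b (Suc k) / b k) \<le> ?t / ?th"
  proof -
    have "(SUP k\<in>{max 3 w0..}. b (Suc k) / b k) \<le> ?t / ?th"
    proof (rule cSUP_least)
      fix k assume "k \<in> {max 3 w0..}"
      then show "b (Suc k) / b k \<le> ?t / ?th" using w0[of k] by simp
    qed simp
    then show ?thesis by simp
  qed
  have W: "3 \<le> Wc b ?t ?th \<and> (SUP k\<in>{Wc b ?t ?th..}. b (Suc k) / b k) \<le> ?t / ?th"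
    unfolding Wc_def by (rule LeastI[where P="\<lambda>w. 3 \<le> w \<and> (SUP k\<in>{w..}. b (Suc k) / b k) \<le> ?t / ?th", OF ex])
  then show "3 \<le> Wc b ?t ?th" by simp
  fix k assume k: "Wc b ?t ?th \<le> k"
  have "b (Suc k) / b k \<le> (SUP k\<in>{Wc b ?t ?th..}. b (Suc k) / b k)"
    by (rule cSUP_upper[OF _ bdd]) (use k in simp)
  then show "b (Suc k) / b k \<le> ?t / ?th" using W by linarith
qed

lemma coord_tail:
  assumes bpos: "\<forall>k. b k > 0" and th0: "0 < th" and t0: "0 < t0"
    and ratio: "\<And>k. W \<le> k \<Longrightarrow> b (Suc k) / b k \<le> t0 / th"
    and \<theta>: "0 \<le> \<theta>" "\<theta> \<le> th" and sm: "summable (\<lambda>k. b k * \<theta>^k)" and KW: "W \<le> K + 1"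
  shows "(\<Sum>x\<in>{K<..N}. fdens b \<theta> x) \<le> t0 ^ (K + 1 - W)"
proof (cases "\<theta> = 0")
  case True
  have "(\<Sum>x\<in>{K<..N}. fdens b \<theta> x) = 0"
    by (rule sum.neutral) (auto simp: fdens_def True)
  then show ?thesis using t0 by simp
next
  case False
  then have tp: "0 < \<theta>" using \<theta> by simp
  have Bp: "0 < bser b \<theta>" using bser_pos[OF bpos \<theta>(1) sm] by simp
  let ?f = "fdens b \<theta>"
  have fn: "0 \<le> ?f x" for x using fdens_props[OF bpos \<theta>(1) sm] by simp
  have step: "?f (Suc k) \<le> t0 * ?f k" if k: "W \<le> k" for k
  proof -
    have "?f (Suc k) = (b (Suc k) / b k) * \<theta> * ?f k"
      using bpos[rule_format, of k] by (simp add: fdens_def field_simps)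
    also have "\<dots> \<le> (t0 / th) * th * ?f k"
      by (intro mult_mono ratio k \<theta>) (use th0 t0 tp fn bpos in \<open>auto intro!: divide_nonneg_nonneg less_imp_le mult_nonneg_nonneg\<close>)
    also have "\<dots> = t0 * ?f k" using th0 by simp
    finally show ?thesis .
  qed
  have iter: "?f (k + j) \<le> t0 ^ j * ?f k" if "W \<le> k" for k j
  proof (induction j)
    case 0 then show ?case by simp
  next
    case (Suc j)
    have "?f (k + Suc j) \<le> t0 * ?f (k + j)" using step[of "k + j"] that by simp
    also have "\<dots> \<le> t0 * (t0 ^ j * ?f k)" using Suc t0 by (intro mult_left_mono) auto
    finally show ?case by (simp add: mult.assoc)
  qed
  let ?s = "K + 1 - W"
  show ?thesis
  proof (cases "K + 1 \<le> N")
    case False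
    then have "{K<..N} = {}" by auto
    then show ?thesis using t0 by simp
  next
    case True
    have eq: "{K<..N} = {W + ?s..(N - ?s) + ?s}" using True KW by auto
    have "(\<Sum>x\<in>{K<..N}. ?f x) = (\<Sum>i\<in>{W..N - ?s}. ?f (i + ?s))"
      unfolding eq by (rule sum.shift_bounds_cl_nat_ivl)
    also have "\<dots> \<le> (\<Sum>i\<in>{W..N - ?s}. t0 ^ ?s * ?f i)"
      by (rule sum_mono) (use iter in auto)
    also have "\<dots> = t0 ^ ?s * (\<Sum>i\<in>{W..N - ?s}. ?f i)" by (simp add: sum_distrib_left)
    also have "\<dots> \<le> t0 ^ ?s * 1"
    proof (rule mult_left_mono)
      have "(\<Sum>i\<in>{W..N - ?s}. ?f i) \<le> (\<Sum>i\<le>N - ?s. ?f i)"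
        by (rule sum_mono2) (auto simp: fn)
      also have "\<dots> \<le> 1" using fdens_props[OF bpos \<theta>(1) sm] by simp
      finally show "(\<Sum>i\<in>{W..N - ?s}. ?f i) \<le> 1" .
    qed (use t0 in simp)
    finally show ?thesis by simp
  qed
qed

lemma maxk_gt: "maxk (k::nat^'d::finite) > K \<longleftrightarrow> (\<exists>i. K < k$i)"
  unfolding maxk_def by (subst Max_gr_iff) auto

lemma maxk_le: "maxk (k::nat^'d::finite) \<le> K \<longleftrightarrow> (\<forall>i. k$i \<le> K)"
  using maxk_gt[of K k] by (meson not_less)

lemma p0_tail:
  fixes Q :: "(real^'d::finite) measure"
  assumes bpos: "\<forall>k. b k > 0" and Q: "valid_mixing b Q"
    and AEbox: "AE \<theta> in Q. \<forall>j. 0 \<le> \<theta>$j \<and> \<theta>$j \<le> th"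
    and boxok: "\<And>\<theta>. 0 \<le> \<theta> \<Longrightarrow> \<theta> \<le> th \<Longrightarrow> summable (\<lambda>k. b k * \<theta>^k)"
    and th0: "0 < th" and t0: "0 < t0"
    and ratio: "\<And>k. W \<le> k \<Longrightarrow> b (Suc k) / b k \<le> t0 / th" and KW: "W \<le> K + 1"
  shows "infsum (mixpmf b Q) {k. maxk k > K} \<le> real CARD('d) * t0 ^ (K + 1 - W)"
proof (rule infsum_le_finite_sums[OF mix_summable[OF bpos Q]])
  fix F :: "(nat^'d) set" assume F: "finite F" and FK: "F \<subseteq> {k. maxk k > K}"
  show "sum (mixpmf b Q) F \<le> real CARD('d) * t0 ^ (K + 1 - W)"
    unfolding mixpmf_def
  proof (rule mix_sum_le[OF _ F])
    show "prob_space Q" using Q by (simp add: valid_mixing_def)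
    show "AE \<theta> in Q. (\<forall>k. 0 \<le> (\<Prod>j\<in>UNIV. fdens b (\<theta> $ j) (k $ j))) \<and>
        (\<Sum>k\<in>F. \<Prod>j\<in>UNIV. fdens b (\<theta> $ j) (k $ j)) \<le> real CARD('d) * t0 ^ (K + 1 - W)"
      using valid_AE[OF Q] AEbox
    proof eventually_elim
      case (elim \<theta>)
      note fd = Theta_fdens[OF bpos elim(1)]
      have "(\<Sum>k\<in>F. \<Prod>j\<in>UNIV. fdens b (\<theta> $ j) (k $ j)) \<le> real CARD('d) * t0 ^ (K + 1 - W)"
      proof (rule prod_box_tail[where f="\<lambda>j x. fdens b (\<theta>$j) x", OF _ _ _ F])
        show "F \<subseteq> {k. \<exists>i. K < k $ i}" using FK by (auto simp: maxk_gt)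
        fix j N
        show "(\<Sum>x\<in>{K<..N}. fdens b (\<theta> $ j) x) \<le> t0 ^ (K + 1 - W)"
          using elim(2) boxok[of "\<theta>$j"] by (intro coord_tail[OF bpos th0 t0 ratio]) (use KW in auto)
      qed (use fd in auto)
      then show ?case using fd by (auto intro!: prod_nonneg)
    qed
  qed
qed

lemma Kn_bound:
  fixes p0 :: "nat^'d::finite \<Rightarrow> real"
  assumes t1: "1/2 \<le> t0" "t0 < 1" and W3: "3 \<le> W"
    and tail: "\<And>K. W \<le> K + 1 \<Longrightarrow> infsum p0 {k. maxk k > K} \<le> real CARD('d) * t0 ^ (K + 1 - W)"
    and n: "real n > 1 / (t0 ^ (W - 1) * (1 - t0))"
  shows "real (Kn p0 n + 1) \<le> 3 * (ln (real (n * CARD('d))) / ln (1 / t0))"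
    "real W < ln (real (n * CARD('d))) / ln (1 / t0)"
    "1 < ln (real (n * CARD('d)))"
proof -
  define D where "D = CARD('d)"
  define L where "L = ln (real (n * D))"
  define l where "l = ln (1 / t0)"
  have t0p: "0 < t0" using t1 by simp
  have lp: "0 < l" unfolding l_def using t1 by simp
  have D1: "1 \<le> D" unfolding D_def by (simp add: Suc_le_eq)
  have tw: "0 < t0 ^ (W - 1)" using t0p by simp
  have "t0 ^ W = t0 ^ (W - 1) * t0" using W3 by (metis Suc_diff_1 less_le_trans power_Suc2 zero_less_numeral)
  also have "\<dots> \<ge> t0 ^ (W - 1) * (1 - t0)" using t1 tw by (intro mult_left_mono) auto
  finally have tW: "t0 ^ (W - 1) * (1 - t0) \<le> t0 ^ W" .
  have pos1: "0 < t0 ^ (W - 1) * (1 - t0)" using tw t1 by simp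
  have "1 < real n * (t0 ^ (W - 1) * (1 - t0))" using n pos1 by (simp add: field_simps)
  also have "\<dots> \<le> real n * t0 ^ W" using tW by (intro mult_left_mono) auto
  finally have nt: "1 < real n * t0 ^ W" .
  then have npos: "0 < real n" using t0p by (metis mult_eq_0_iff not_less_iff_gr_or_eq of_nat_0 of_nat_less_0_iff zero_less_one less_trans)
  have "0 < ln (real n * t0 ^ W)" using nt by simp
  then have "0 < ln (real n) + real W * ln t0" using npos t0p by (simp add: ln_mult ln_realpow)
  then have WL0: "real W * l < ln (real n)" unfolding l_def using t0p by (simp add: ln_div)
  have "ln (real n) \<le> L" unfolding L_def using npos D1
    by (simp add: ln_mult) 
  then have WL: "real W * l < L" using WL0 by linarith
  then show "real W < ln (real (n * CARD('d))) / ln (1 / t0)"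
    using lp by (simp add: L_def l_def D_def field_simps)
  have "1 / (1 - t0) \<le> 1 / (t0 ^ (W - 1) * (1 - t0))"
  proof -
    have "t0 ^ (W - 1) \<le> 1" using t1 t0p by (simp add: power_le_one)
    then have "t0 ^ (W - 1) * (1 - t0) \<le> 1 - t0" using t1 by (simp add: mult_left_le_one_le)
    then show ?thesis using pos1 by (intro divide_left_mono) auto
  qed
  moreover have "2 \<le> 1 / (1 - t0)" using t1 by (simp add: field_simps)
  ultimately have "2 < real n" using n by linarith
  then have "3 \<le> n" by linarith
  then have "3 * 1 \<le> n * D" using D1 by (intro mult_le_mono) auto
  then have "3 \<le> real (n * D)" by linarith
  then have L1: "1 < L" unfolding L_def using ln3_gt_1 by (smt (verit) ln_le_cancel_iff)
  then show "1 < ln (real (n * CARD('d)))" by (simp add: L_def D_def)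
  define j where "j = nat \<lceil>L / l\<rceil>"
  have jge: "L / l \<le> real j" unfolding j_def by linarith
  have "0 < L / l" using L1 lp by simp
  then have "real j = of_int \<lceil>L / l\<rceil>" unfolding j_def by simp
  then have jle: "real j < L / l + 1" using ceiling_correct[of "L / l"] by linarith
  define K where "K = W - 1 + j"
  have KW: "W \<le> K + 1" and Kj: "K + 1 - W = j" unfolding K_def using W3 by auto
  have "t0 ^ j = t0 powr (real j)" using t0p by (simp add: powr_realpow)
  also have "\<dots> \<le> t0 powr (L / l)" using jge t1 t0p by (intro powr_mono') auto
  also have "\<dots> = exp (- L)" unfolding powr_def l_def using t0p lp l_def
    by (simp add: ln_div)
  also have "\<dots> = 1 / real (n * D)" unfolding L_def using npos D1 by (simp add: exp_minus field_simps)
  finally have tj: "t0 ^ j \<le> 1 / real (n * D)" .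
  have "infsum p0 {k. maxk k > K} \<le> real D * t0 ^ j" using tail[OF KW] Kj by (simp add: D_def)
  also have "\<dots> \<le> real D * (1 / real (n * D))" using tj D1 by (intro mult_left_mono) auto
  also have "\<dots> = 1 / real n" using D1 by simp
  also have "\<dots> \<le> L ^ (2 + D) / real n"
  proof -
    have "1 \<le> L ^ (2 + D)" using L1 by (intro one_le_power) simp
    then show ?thesis using npos by (simp add: divide_right_mono)
  qed
  finally have "infsum p0 {k. maxk k > K} \<le> L ^ (2 + D) / real n" .
  then have "Kn p0 n \<le> K" unfolding Kn_def L_def D_def by (rule Least_le)
  then have "real (Kn p0 n + 1) \<le> real K + 1" by simp
  also have "\<dots> = real W + real j" unfolding K_def using W3 by simp
  also have "\<dots> \<le> 3 * (L / l)"
  proof -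
    have "real W < L / l" using WL lp by (simp add: field_simps)
    then show ?thesis using jle W3 by linarith
  qed
  finally show "real (Kn p0 n + 1) \<le> 3 * (ln (real (n * CARD('d))) / ln (1 / t0))"
    by (simp add: L_def l_def D_def)
qed

lemma Pmeas_integral:
  fixes p0 :: "nat^'d::finite \<Rightarrow> real" and h :: "nat^'d \<Rightarrow> real"
  assumes p0n: "\<And>k. 0 \<le> p0 k" and S: "finite S" and hS: "\<And>x. x \<notin> S \<Longrightarrow> h x = 0"
  shows "(\<integral>\<^sup>+ x. ennreal ((h x)^2) \<partial>Pmeas p0) = ennreal (\<Sum>x\<in>S. p0 x * (h x)^2)"
proof -
  have "(\<integral>\<^sup>+ x. ennreal ((h x)^2) \<partial>Pmeas p0) = (\<integral>\<^sup>+ x. ennreal (p0 x) * ennreal ((h x)^2) \<partial>count_space UNIV)"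
    unfolding Pmeas_def by (rule nn_integral_density) auto
  also have "\<dots> = (\<integral>\<^sup>+ x. ennreal (p0 x * (h x)^2) \<partial>count_space UNIV)"
    by (simp add: ennreal_mult'')
  also have "\<dots> = (\<Sum>x\<in>S. ennreal (p0 x * (h x)^2))"
    by (rule nn_integral_count_space'[OF S]) (auto simp: hS)
  also have "\<dots> = ennreal (\<Sum>x\<in>S. p0 x * (h x)^2)"
    by (rule sum_ennreal) (simp add: p0n)
  finally show ?thesis .
qed

lemma bracket_bound:
  fixes p0 :: "nat^'d::finite \<Rightarrow> real" and G :: "(nat^'d \<Rightarrow> real) set" and a :: "nat^'d \<Rightarrow> real"
  assumes p0n: "\<And>k. 0 \<le> p0 k" and S: "finite S"
    and Gb: "\<And>g k. g \<in> G \<Longrightarrow> (k \<notin> S \<longrightarrow> g k = 0) \<and> (k \<in> S \<longrightarrow> \<bar>g k\<bar> \<le> a k)"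
    and apos: "\<And>k. 0 < a k" and ac: "\<And>k. k \<in> S \<Longrightarrow> p0 k * (2 * a k)^2 \<le> c"
    and N: "0 < N" and Nu: "real (card S) * c \<le> (real N)^2 * u^2"
  shows "brack_num (Pmeas p0) G u \<le> enat (N ^ card S)"
proof -
  define w where "w k = 2 * a k / real N" for k
  have wpos: "0 < w k" for k using apos N by (simp add: w_def)
  define L where "L c k = (if k \<in> S then - a k + real (c k) * w k else 0)" for c :: "nat^'d \<Rightarrow> nat" and k
  define U where "U c k = (if k \<in> S then - a k + real (c k + 1) * w k else 0)" for c :: "nat^'d \<Rightarrow> nat" and k
  define C where "C = PiE S (\<lambda>_. {..<N})"
  define F where "F = (\<lambda>c. (L c, U c)) ` C"
  have finC: "finite C" unfolding C_def using S by (simp add: finite_PiE)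
  have cardC: "card C = N ^ card S" unfolding C_def using S by (simp add: card_PiE)
  have cardF: "card F \<le> N ^ card S" unfolding F_def using card_image_le[OF finC] cardC by simp
  have cov: "bracket_cover (Pmeas p0) G u F"
    unfolding bracket_cover_def
  proof (intro conjI ballI)
    show "finite F" unfolding F_def using finC by simp
  next
    fix LU assume "LU \<in> F"
    then obtain cc where LU: "LU = (L cc, U cc)" unfolding F_def by auto
    have LUle: "\<forall>x. L cc x \<le> U cc x" using wpos by (auto simp: L_def U_def)
    have diff: "U cc x - L cc x = (if x \<in> S then w x else 0)" for x by (simp add: L_def U_def algebra_simps)
    have "(\<integral>\<^sup>+ x. ennreal ((U cc x - L cc x)^2) \<partial>Pmeas p0) = ennreal (\<Sum>x\<in>S. p0 x * (U cc x - L cc x)^2)"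
      by (rule Pmeas_integral[OF p0n S]) (simp add: diff)
    also have "\<dots> \<le> ennreal (u^2)"
    proof (rule ennreal_leI)
      show "(\<Sum>x\<in>S. p0 x * (U cc x - L cc x)^2) \<le> u^2"
      proof -
        have "(\<Sum>x\<in>S. p0 x * (U cc x - L cc x)^2) = (\<Sum>x\<in>S. p0 x * (2 * a x)^2 / (real N)^2)"
          by (rule sum.cong) (auto simp: diff w_def power_divide)
        also have "\<dots> \<le> (\<Sum>x\<in>S. c / (real N)^2)"
          by (rule sum_mono) (use ac in \<open>auto intro!: divide_right_mono\<close>)
        also have "\<dots> = real (card S) * c / (real N)^2" by simp
        also have "\<dots> \<le> u^2" using Nu N by (simp add: divide_le_eq mult.commute)
        finally show ?thesis .
      qed
    qed
    finally show "case LU of (L, U) \<Rightarrow> (\<forall>x. L x \<le> U x) \<and> (\<integral>\<^sup>+ x. ennreal ((U x - L x)\<^sup>2) \<partial>Pmeas p0) \<le> ennreal (u\<^sup>2)"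
      using LUle LU by simp
  next
    fix g assume g: "g \<in> G"
    define cc where "cc k = (if k \<in> S then min (N - 1) (nat \<lfloor>(g k + a k) / w k\<rfloor>) else undefined)" for k
    have cC: "cc \<in> C" unfolding C_def cc_def using N by auto
    have "\<forall>x. L cc x \<le> g x \<and> g x \<le> U cc x"
    proof
      fix x
      show "L cc x \<le> g x \<and> g x \<le> U cc x"
      proof (cases "x \<in> S")
        case False
        then show ?thesis using Gb[OF g, of x] by (simp add: L_def U_def)
      next
        case True
        have gb: "\<bar>g x\<bar> \<le> a x" using Gb[OF g, of x] True by simp
        define t where "t = (g x + a x) / w x"
        have t0: "0 \<le> t" unfolding t_def using gb wpos[of x] by (simp add: abs_le_iff)
        have tN: "t \<le> real N" unfolding t_def using gb wpos[of x] apos[of x] N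
          by (simp add: divide_le_eq w_def abs_le_iff field_simps)
        have gt: "g x = - a x + t * w x" unfolding t_def using wpos[of x] by simp
        have cx: "cc x = min (N - 1) (nat \<lfloor>t\<rfloor>)" using True by (simp add: cc_def t_def)
        have fl: "real (nat \<lfloor>t\<rfloor>) \<le> t" "t < real (nat \<lfloor>t\<rfloor>) + 1" using t0 by linarith+
        have c1: "real (cc x) \<le> t" using fl cx by (simp add: min_def)
        have c2: "t \<le> real (cc x) + 1" using fl cx tN N by (auto simp: min_def of_nat_diff)
        have "L cc x = - a x + real (cc x) * w x" using True by (simp add: L_def)
        also have "\<dots> \<le> g x" unfolding gt using c1 wpos[of x] by (simp add: mult_right_mono)
        finally have l: "L cc x \<le> g x" .
        have "g x \<le> - a x + (real (cc x) + 1) * w x" unfolding gt using c2 wpos[of x] by (simp add: mult_right_mono)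
        also have "\<dots> = U cc x" using True by (simp add: U_def)
        finally show ?thesis using l by simp
      qed
    qed
    then show "\<exists>(L, U)\<in>F. \<forall>x. L x \<le> g x \<and> g x \<le> U x"
      using cC unfolding F_def by blast
  qed
  have "brack_num (Pmeas p0) G u \<le> enat (card F)"
    unfolding brack_num_def using cov by (intro INF_lower2[of F]) auto
  also have "\<dots> \<le> enat (N ^ card S)" using cardF by simp
  finally show ?thesis .
qed

lemma HB_le:
  assumes "brack_num P G u \<le> enat (N ^ m)" and N: "1 \<le> N"
  shows "\<exists>x. HB P G u = ereal x \<and> x \<le> real m * ln (real N)"
proof (cases "brack_num P G u")
  case (enat k)
  then have k: "k \<le> N ^ m" using assms by simp
  have "ln (real k) \<le> real m * ln (real N)"
  proof (cases "k = 0")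
    case True then show ?thesis using N by simp
  next
    case False
    have "real k \<le> real (N ^ m)" using k by linarith
    then have "ln (real k) \<le> ln (real (N ^ m))" using False by (intro ln_mono) auto
    also have "\<dots> = real m * ln (real N)" using N by (simp add: ln_realpow)
    finally show ?thesis .
  qed
  then show ?thesis using enat by (simp add: HB_def)
next
  case infinity then show ?thesis using assms by simp
qed

lemma JB_bound:
  fixes P :: "'a measure" and G :: "('a \<Rightarrow> real) set"
  assumes dp: "0 < \<delta>" and m1: "1 \<le> m"
    and HBb: "\<And>u. 0 < u \<Longrightarrow> u \<le> \<delta> \<Longrightarrow>
       \<exists>x. HB P G u = ereal x \<and> x \<le> m * ln (real (nat \<lceil>4 * sqrt m * \<delta> / u\<rceil>))"
  shows "JB P G \<delta> \<le> ennreal ((sqrt (1 + m * ln (4 * sqrt m + 1)) + 2 * sqrt m) * \<delta>)"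
proof -
  define A where "A = sqrt (1 + m * ln (4 * sqrt m + 1))"
  define B where "B = sqrt m * sqrt \<delta>"
  have sm: "1 \<le> sqrt m" using m1 by simp
  have ln0: "0 \<le> ln (4 * sqrt m + 1)" using sm by simp
  have smp: "0 < 4 * sqrt m + 1" using sm by linarith
  have "0 \<le> 1 + m * ln (4 * sqrt m + 1)" using m1 ln0 by (simp add: add_nonneg_nonneg)
  then have A0: "0 \<le> A" unfolding A_def by simp
  have B0: "0 \<le> B" unfolding B_def using m1 dp by simp
  let ?H = "\<lambda>u. (case HB P G u of ereal x \<Rightarrow> ennreal (sqrt (1 + x)) | _ \<Rightarrow> \<infinity>)"
  have pw: "?H u \<le> ennreal (A + B * u powr (-1/2))" if u: "0 < u" "u \<le> \<delta>" for u
  proof -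
    obtain x where x: "HB P G u = ereal x" "x \<le> m * ln (real (nat \<lceil>4 * sqrt m * \<delta> / u\<rceil>))"
      using HBb[OF u] by blast
    define N where "N = nat \<lceil>4 * sqrt m * \<delta> / u\<rceil>"
    have du: "1 \<le> \<delta> / u" using u by simp
    have q: "0 < 4 * sqrt m * \<delta> / u" using u dp sm by simp
    then have Npos: "0 < real N" unfolding N_def by simp
    have "real N = of_int \<lceil>4 * sqrt m * \<delta> / u\<rceil>" unfolding N_def using q by simp
    then have "real N \<le> 4 * sqrt m * \<delta> / u + 1" by simp
    also have "\<dots> \<le> (4 * sqrt m + 1) * (\<delta> / u)" using du by (simp add: algebra_simps)
    finally have NN: "real N \<le> (4 * sqrt m + 1) * (\<delta> / u)" .
    have "ln (real N) \<le> ln ((4 * sqrt m + 1) * (\<delta> / u))" using NN Npos by simp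
    also have "\<dots> = ln (4 * sqrt m + 1) + ln (\<delta> / u)" by (rule ln_mult_pos) (use smp u dp in auto)
    also have "\<dots> \<le> ln (4 * sqrt m + 1) + \<delta> / u" using ln_le_minus_one[of "\<delta> / u"] u dp by simp
    finally have lnN: "ln (real N) \<le> ln (4 * sqrt m + 1) + \<delta> / u" .
    have "sqrt (1 + x) \<le> sqrt (1 + m * ln (real N))" using x N_def by simp
    also have "\<dots> \<le> sqrt ((1 + m * ln (4 * sqrt m + 1)) + m * (\<delta> / u))"
    proof -
      have "m * ln (real N) \<le> m * (ln (4 * sqrt m + 1) + \<delta> / u)" using lnN m1 by (intro mult_left_mono) auto
      then show ?thesis by (simp add: algebra_simps)
    qed
    also have "\<dots> \<le> sqrt (1 + m * ln (4 * sqrt m + 1)) + sqrt (m * (\<delta> / u))"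
    proof (rule sqrt_add_le_add_sqrt)
      show "0 \<le> 1 + m * ln (4 * sqrt m + 1)" using m1 ln0 by (simp add: add_nonneg_nonneg)
      show "0 \<le> m * (\<delta> / u)" using m1 u dp by simp
    qed
    also have "sqrt (m * (\<delta> / u)) = B * u powr (-1/2)"
    proof -
      have "u powr (-1/2) = 1 / sqrt u" using u by (simp add: powr_minus_divide powr_half_sqrt)
      then show ?thesis unfolding B_def using u by (simp add: real_sqrt_mult real_sqrt_divide)
    qed
    finally have "sqrt (1 + x) \<le> A + B * u powr (-1/2)" unfolding A_def .
    then show ?thesis using x by (simp add: ennreal_leI)
  qed
  have int: "((\<lambda>u. A + B * u powr (-1/2)) has_integral (A * \<delta> + B * (\<delta> powr (1/2) / (1/2)))) {0..\<delta>}"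
  proof (rule has_integral_add)
    show "((\<lambda>u. A) has_integral A * \<delta>) {0..\<delta>}" using has_integral_const_real[of A 0 \<delta>] dp by (simp add: mult.commute)
    have "((\<lambda>u. u powr (-1/2)) has_integral (\<delta> powr (-1/2 + 1) / (-1/2 + 1))) {0..\<delta>}"
      by (rule has_integral_powr_from_0) (use dp in auto)
    then show "((\<lambda>u. B * u powr (-1/2)) has_integral B * (\<delta> powr (1/2) / (1/2))) {0..\<delta>}"
      by (intro has_integral_mult_right) simp
  qed
  have "JB P G \<delta> = (\<integral>\<^sup>+ u. ?H u * indicator {0..\<delta>} u \<partial>lborel)" unfolding JB_def by simp
  also have "\<dots> \<le> (\<integral>\<^sup>+ u. ennreal (indicator {0..\<delta>} u * (A + B * u powr (-1/2))) \<partial>lborel)"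
  proof (rule nn_integral_mono_AE)
    show "AE u in lborel. ?H u * indicator {0..\<delta>} u \<le> ennreal (indicator {0..\<delta>} u * (A + B * u powr (-1/2)))"
      using AE_lborel_singleton[of 0]
    proof eventually_elim
      case (elim u)
      show ?case
      proof (cases "u \<in> {0..\<delta>}")
        case True
        then show ?thesis using pw[of u] elim by simp
      next
        case False then show ?thesis by simp
      qed
    qed
  qed
  also have "\<dots> = ennreal (A * \<delta> + B * (\<delta> powr (1/2) / (1/2)))"
    by (rule nn_integral_has_integral_lebesgue[OF _ int]) (use A0 B0 in auto)
  also have "A * \<delta> + B * (\<delta> powr (1/2) / (1/2)) = (A + 2 * sqrt m) * \<delta>"
    unfolding B_def using dp by (simp add: powr_half_sqrt algebra_simps)
  finally show ?thesis unfolding A_def .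
qed

lemma final_arith:
  fixes x m :: real and D :: nat
  assumes D1: "1 \<le> D" and x3: "3 \<le> x" and m1: "1 \<le> m" and mx: "m \<le> (3 * x) ^ D"
  shows "sqrt (1 + m * ln (4 * sqrt m + 1)) + 2 * sqrt m
     \<le> 3 powr ((5 + real D) / 2) * sqrt (real D) * x powr (1 + real D / 2)"
proof -
  define r where "r = sqrt m"
  define s where "s = (3 * x) powr (real D / 2)"
  have r1: "1 \<le> r" unfolding r_def using m1 by simp
  have rs: "r \<le> s"
  proof -
    have "r = sqrt m" by (simp add: r_def)
    also have "\<dots> \<le> sqrt ((3 * x) ^ D)" using mx by simp
    also have "\<dots> = s"
    proof -
      have "s = sqrt ((3 * x) powr real D)" unfolding s_def using x3 by (intro powr_half_sqrt_powr) simp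
      also have "(3 * x) powr real D = (3 * x) ^ D" using x3 by (simp add: powr_realpow)
      finally show ?thesis by simp
    qed
    finally show ?thesis .
  qed
  have D1r: "1 \<le> real D" using D1 by simp
  have sD: "1 \<le> sqrt (real D)" using D1r by simp
  have Dx: "3 \<le> real D * x" using D1r x3 by (metis mult_mono mult_1 zero_le_one order_trans less_imp_le zero_less_numeral numeral_le_one_iff semiring_norm(68) le_numeral_extra(1) order.trans)
  have m_eq: "m = r^2" unfolding r_def using m1 by simp
  have l1: "ln (4 * r + 1) \<le> ln 5 + ln r"
  proof -
    have "ln (4 * r + 1) \<le> ln (5 * r)" using r1 by simp
    also have "\<dots> = ln 5 + ln r" using r1 by (simp add: ln_mult_pos)
    finally show ?thesis .
  qed
  have l5: "ln (5::real) \<le> 4" using ln_le_minus_one[of 5] by simp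
  have lr: "ln r \<le> real D / 2 * (3 * x)"
  proof -
    have "ln r \<le> ln s" using r1 rs by simp
    also have "\<dots> = real D / 2 * ln (3 * x)" unfolding s_def using x3 by (simp add: ln_powr)
    also have "\<dots> \<le> real D / 2 * (3 * x)"
      using ln_le_minus_one[of "3 * x"] x3 by (intro mult_left_mono) auto
    finally show ?thesis .
  qed
  have lnb: "1 + ln (4 * r + 1) \<le> 4 * (real D * x)" using l1 l5 lr Dx by (simp add: algebra_simps) 
  have lnn: "0 \<le> ln (4 * r + 1)" using r1 by simp
  have sx: "sqrt x \<le> x"
  proof -
    have "sqrt x * 1 \<le> sqrt x * sqrt x" using x3 by (intro mult_left_mono) auto
    then show ?thesis using x3 by simp
  qed
  have "1 + m * ln (4 * r + 1) \<le> m * (1 + ln (4 * r + 1))" using m1 by (simp add: algebra_simps)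
  then have "sqrt (1 + m * ln (4 * sqrt m + 1)) \<le> sqrt (m * (1 + ln (4 * r + 1)))"
    unfolding r_def by simp
  also have "\<dots> = r * sqrt (1 + ln (4 * r + 1))" unfolding r_def by (simp add: real_sqrt_mult)
  also have "\<dots> \<le> r * sqrt (4 * (real D * x))" using lnb r1 by (intro mult_left_mono) auto
  also have "\<dots> = r * (2 * sqrt (real D) * sqrt x)" by (simp add: real_sqrt_mult)
  also have "\<dots> \<le> r * (2 * sqrt (real D) * x)" using sx r1 sD by (intro mult_left_mono) auto
  finally have t1: "sqrt (1 + m * ln (4 * sqrt m + 1)) \<le> r * (2 * sqrt (real D) * x)" .
  have t2: "2 * sqrt m \<le> r * (2 * sqrt (real D) * x)"
  proof -
    have "1 \<le> sqrt (real D) * x" using sD x3 by (metis mult_mono one_le_numeral order_trans mult_1 zero_le_one)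
    then show ?thesis unfolding r_def[symmetric] using r1 by (simp add: mult_left_mono)
  qed
  have s3: "15 \<le> 3 powr (5/2::real)"
  proof -
    have "(3::real) powr (5/2) = 3 powr (2 + 1/2)" by simp
    also have "\<dots> = 3 powr 2 * 3 powr (1/2)" by (rule powr_add)
    also have "\<dots> = 9 * sqrt 3" by (simp add: powr_half_sqrt powr_numeral)
    finally have e: "(3::real) powr (5/2) = 9 * sqrt 3" .
    have "17/10 \<le> sqrt (3::real)" by (rule real_le_rsqrt) (simp add: power2_eq_square)
    then show ?thesis using e by simp
  qed
  have "sqrt (1 + m * ln (4 * sqrt m + 1)) + 2 * sqrt m \<le> 4 * sqrt (real D) * x * r"
    using t1 t2 by (simp add: algebra_simps)
  also have "\<dots> \<le> 3 powr (5/2) * sqrt (real D) * x * s"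
  proof -
    have "4 * sqrt (real D) * x \<le> 3 powr (5/2) * sqrt (real D) * x"
      using s3 sD x3 by (intro mult_right_mono) auto
    then show ?thesis using rs r1 sD x3 by (intro mult_mono) auto
  qed
  also have "\<dots> = 3 powr ((5 + real D) / 2) * sqrt (real D) * x powr (1 + real D / 2)"
  proof -
    have "s = 3 powr (real D / 2) * x powr (real D / 2)" unfolding s_def using x3 by (simp add: powr_mult)
    moreover have "x powr (1 + real D / 2) = x * x powr (real D / 2)" using x3 by (simp add: powr_add)
    moreover have "(3::real) powr ((5 + real D) / 2) = 3 powr (5/2) * 3 powr (real D / 2)"
      by (simp add: powr_add[symmetric] add_divide_distrib)
    ultimately show ?thesis by (simp add: algebra_simps)
  qed
  finally show ?thesis .
qed

lemma card_box:
  assumes "\<And>i. finite (A i)"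
  shows "card {k::nat^'d::finite. \<forall>i. k$i \<in> A i} = (\<Prod>i\<in>UNIV. card (A i))"
proof -
  have "real (card {k::nat^'d. \<forall>i. k$i \<in> A i}) = (\<Sum>k\<in>{k::nat^'d. \<forall>i. k$i \<in> A i}. \<Prod>i\<in>UNIV. (\<lambda>i x. 1::real) i (k$i))"
    by simp
  also have "\<dots> = (\<Prod>i\<in>UNIV. \<Sum>x\<in>A i. (1::real))" by (rule box_sum_prod[OF assms])
  also have "\<dots> = real (\<Prod>i\<in>UNIV. card (A i))" by simp
  finally show ?thesis by (simp only: of_nat_eq_iff)
qed

lemma ratio_abs_le1:
  fixes p q :: real
  assumes "0 \<le> p" "0 \<le> q"
  shows "\<bar>(p - q) / (p + q)\<bar> \<le> 1"
proof (cases "p + q = 0")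
  case True then show ?thesis by simp
next
  case False
  then have "0 < p + q" using assms by simp
  then show ?thesis using assms by (simp add: abs_divide divide_le_eq abs_le_iff)
qed

lemma nat_floor_gt: "(y::real) < real (nat \<lfloor>y\<rfloor> + 1)"
  by (cases "0 \<le> y") linarith+

theorem proposition1:
  fixes b :: "nat \<Rightarrow> real" and Q0 :: "(real ^ 'd) measure"
    and q0 M \<delta>0 \<eta>0 \<delta> :: real and V n :: nat
  assumes b_pos: "\<forall>k. b k > 0"
    and R_pos: "Rad b > 0"
    and Q0: "valid_mixing b Q0"
    and A1_fin: "Rad b \<noteq> \<infinity> \<longrightarrow> 0 < q0 \<and> q0 < 1 \<and>
          msupp Q0 \<subseteq> {\<theta>. \<forall>j. 0 \<le> \<theta> $ j \<and> \<theta> $ j \<le> q0 * real_of_ereal (Rad b)}"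
    and A1_inf: "Rad b = \<infinity> \<longrightarrow> 0 < M \<and> msupp Q0 \<subseteq> {\<theta>. \<forall>j. 0 \<le> \<theta> $ j \<and> \<theta> $ j \<le> M}"
    and A2_delta: "0 < \<delta>0" "ereal \<delta>0 < Rad b"
          "msupp Q0 \<inter> {\<theta>. \<exists>j. 0 < \<theta> $ j \<and> \<theta> $ j < \<delta>0} = {}"
    and A2_eta: "0 < \<eta>0" "\<eta>0 \<le> 1"
          "measure Q0 {0} > 0 \<longrightarrow> \<eta>0 < 1 \<and> measure Q0 {0} \<le> 1 - \<eta>0"
    and A3: "\<forall>k\<ge>V. b k / b 0 \<ge> 1 / real k ^ k"
    and A4: "convergent (\<lambda>k. b (Suc k) / b k)"
    and n_large: "n \<ge> Nc b CARD('d) (t0c b q0) (thetac b q0 M) \<delta>0 \<eta>0 V"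
    and delta_pos: "\<delta> > 0"
  shows "JB (Pmeas (mixpmf b Q0)) (Gn b (mixpmf b Q0) n \<delta>) \<delta>
     \<le> ennreal (3 powr ((5 + real CARD('d)) / 2) * sqrt (real CARD('d))
          * ln (real (n * CARD('d))) powr (1 + real CARD('d) / 2) * \<delta>
          / ln (1 / t0c b q0) powr (1 + real CARD('d) / 2))"
proof -
  define D where "D = CARD('d)"
  define t0 where "t0 = t0c b q0"
  define th where "th = thetac b q0 M"
  define W where "W = Wc b t0 th"
  define p0 where "p0 = mixpmf b Q0"
  have cp: "1/2 \<le> t0" "t0 < 1" "0 < th"
    "\<And>\<theta>. 0 \<le> \<theta> \<Longrightarrow> \<theta> \<le> th \<Longrightarrow> summable (\<lambda>k. b k * \<theta>^k) \<and> \<theta> \<in> Tset b"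
    "3 \<le> W" "\<And>k. W \<le> k \<Longrightarrow> b (Suc k) / b k \<le> t0 / th"
    using consts_props[OF b_pos R_pos _ _ A4, of q0 M] A1_fin A1_inf
    unfolding t0_def th_def W_def by auto
  have t0p: "0 < t0" using cp by simp
  have sub: "msupp Q0 \<subseteq> {\<theta>. \<forall>j. 0 \<le> \<theta>$j \<and> \<theta>$j \<le> th}"
    using A1_fin A1_inf by (cases "Rad b = \<infinity>") (auto simp: th_def thetac_def)
  have AEbox: "AE \<theta> in Q0. \<forall>j. 0 \<le> \<theta>$j \<and> \<theta>$j \<le> th"
    using msupp_AE[OF _ sub] Q0 by (simp add: valid_mixing_def)
  have tail: "infsum p0 {k. maxk k > K} \<le> real CARD('d) * t0 ^ (K + 1 - W)" if "W \<le> K + 1" for K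
    unfolding p0_def
    by (rule p0_tail[OF b_pos Q0 AEbox _ cp(3) t0p cp(6) that]) (use cp(4) in blast)
  have nB: "real n > 1 / (t0 ^ (W - 1) * (1 - t0))"
  proof -
    have "1 / (t0 ^ (W - 1) * (1 - t0)) < real (Nc b CARD('d) (t0c b q0) (thetac b q0 M) \<delta>0 \<eta>0 V)"
      unfolding Nc_def t0_def[symmetric] th_def[symmetric] W_def[symmetric]
      using nat_floor_gt by (smt (verit) max.cobounded2)
    then show ?thesis using n_large by linarith
  qed
  define L where "L = ln (real (n * D))"
  define l where "l = ln (1 / t0)"
  define x where "x = L / l"
  have KB: "real (Kn p0 n + 1) \<le> 3 * x" "real W < x" "1 < L"
    using Kn_bound[OF cp(1,2,5) tail nB] unfolding x_def L_def l_def D_def by auto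
  have lp: "0 < l" unfolding l_def using cp by simp
  have x3: "3 \<le> x" using KB cp(5) by linarith
  define K where "K = Kn p0 n"
  define S where "S = {k::nat^'d. \<forall>i. k$i \<in> {..K}}"
  have S_eq: "S = {k. maxk k \<le> Kn p0 n}" unfolding S_def K_def by (auto simp: maxk_le)
  have finS: "finite S" unfolding S_def by (rule finite_box) simp
  have cardS: "card S = (K + 1) ^ D" unfolding S_def D_def by (subst card_box) auto
  define m where "m = card S"
  have D1: "1 \<le> D" unfolding D_def by (simp add: Suc_le_eq)
  have m1: "1 \<le> real m" unfolding m_def cardS by simp
  have mx: "real m \<le> (3 * x) ^ D"
  proof -
    have "real m = real (K + 1) ^ D" unfolding m_def cardS by simp
    also have "\<dots> \<le> (3 * x) ^ D" using KB(1) unfolding K_def by (intro power_mono) auto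
    finally show ?thesis .
  qed
  have p0n: "\<And>k. 0 \<le> p0 k" unfolding p0_def by (rule mix_nonneg[OF b_pos Q0])
  define a where "a k = (if p0 k > 0 then 2 * \<delta> / sqrt (p0 k) else 1)" for k
  have apos: "\<And>k. 0 < a k" unfolding a_def using delta_pos by simp
  have ac: "p0 k * (2 * a k)^2 \<le> 16 * \<delta>^2" for k
  proof (cases "p0 k > 0")
    case True
    then have "p0 k * (2 * a k)^2 = 16 * \<delta>^2" unfolding a_def
      by (simp add: power_divide power_mult_distrib)
    then show ?thesis by simp
  next
    case False
    then have "p0 k = 0" using p0n[of k] by simp
    then show ?thesis by simp
  qed
  let ?G = "Gn b (mixpmf b Q0) n \<delta>"
  have Gb: "(k \<notin> S \<longrightarrow> g k = 0) \<and> (k \<in> S \<longrightarrow> \<bar>g k\<bar> \<le> a k)" if g: "g \<in> ?G" for g k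
  proof -
    obtain p where gp: "g = (\<lambda>k. (p k - p0 k) / (p k + p0 k) * (if maxk k \<le> Kn p0 n then 1 else 0))"
      and pM: "p \<in> Mset b" and hp: "hell p p0 \<le> \<delta>"
      using g unfolding Gn_def p0_def by blast
    obtain Q where pQ: "p = mixpmf b Q" and Q: "valid_mixing b Q" using pM unfolding Mset_def by blast
    have pn: "\<And>k. 0 \<le> p k" unfolding pQ by (rule mix_nonneg[OF b_pos Q])
    have ps: "p summable_on UNIV" unfolding pQ by (rule mix_summable[OF b_pos Q])
    have p0s: "p0 summable_on UNIV" unfolding p0_def by (rule mix_summable[OF b_pos Q0])
    have hpt: "\<bar>sqrt (p k) - sqrt (p0 k)\<bar> \<le> sqrt 2 * \<delta>"
      by (rule hell_point[OF pn p0n ps p0s hp])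
    show ?thesis
    proof (intro conjI impI)
      assume "k \<notin> S" then show "g k = 0" unfolding gp S_eq by simp
    next
      assume kS: "k \<in> S"
      then have gk: "g k = (p k - p0 k) / (p k + p0 k)" unfolding gp S_eq by simp
      show "\<bar>g k\<bar> \<le> a k"
      proof (cases "p0 k > 0")
        case True
        then show ?thesis unfolding gk a_def using g_bound[OF pn True hpt] by simp
      next
        case False
        then show ?thesis unfolding gk a_def using ratio_abs_le1[OF pn p0n] by simp
      qed
    qed
  qed
  have HBb: "\<exists>y. HB (Pmeas p0) ?G u = ereal y \<and> y \<le> real m * ln (real (nat \<lceil>4 * sqrt (real m) * \<delta> / u\<rceil>))"
    if u: "0 < u" "u \<le> \<delta>" for u
  proof -
    define N where "N = nat \<lceil>4 * sqrt (real m) * \<delta> / u\<rceil>"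
    have q: "0 < 4 * sqrt (real m) * \<delta> / u" using u delta_pos m1 by simp
    then have N0: "0 < N" unfolding N_def by simp
    have Nge: "4 * sqrt (real m) * \<delta> / u \<le> real N" unfolding N_def using q by linarith
    have Nu: "real (card S) * (16 * \<delta>^2) \<le> (real N)^2 * u^2"
    proof -
      have "4 * sqrt (real m) * \<delta> \<le> real N * u" using Nge u by (simp add: divide_le_eq)
      then have "(4 * sqrt (real m) * \<delta>)^2 \<le> (real N * u)^2"
        using delta_pos m1 by (intro power_mono) auto
      then show ?thesis unfolding m_def by (simp add: power_mult_distrib)
    qed
    have "brack_num (Pmeas p0) ?G u \<le> enat (N ^ card S)"
      by (rule bracket_bound[OF p0n finS _ apos ac N0 Nu]) (use Gb in blast)
    then show ?thesis using HB_le[of "Pmeas p0" ?G u N m] N0 unfolding m_def N_def by simp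
  qed
  have "JB (Pmeas p0) ?G \<delta> \<le> ennreal ((sqrt (1 + real m * ln (4 * sqrt (real m) + 1)) + 2 * sqrt (real m)) * \<delta>)"
    by (rule JB_bound[OF delta_pos m1 HBb])
  also have "\<dots> \<le> ennreal (3 powr ((5 + real D) / 2) * sqrt (real D) * x powr (1 + real D / 2) * \<delta>)"
    using final_arith[OF D1 x3 m1 mx] delta_pos by (intro ennreal_leI mult_right_mono) auto
  also have "3 powr ((5 + real D) / 2) * sqrt (real D) * x powr (1 + real D / 2) * \<delta>
      = 3 powr ((5 + real D) / 2) * sqrt (real D) * L powr (1 + real D / 2) * \<delta> / l powr (1 + real D / 2)"
    unfolding x_def using KB(3) lp by (simp add: powr_divide)
  finally show ?thesis unfolding p0_def L_def l_def D_def t0_def .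
qed

end
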